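(* Let $A,B\subseteq \mathbb{R}^2$ be finite two-dimensional subsets (i.e., neither is contained in a line) with $0\in A\cap B$. Let $m$ and $n$ be the exact number of vertical lines which cover $A$ and $B$ respectively. Suppose $$|A+B|=\left(\frac{|A|}{m}+\frac{|B|}{n}-1\right)(m+n-1).$$ Then there exists a linear transformation $\varphi:\mathbb{R}^2\to\mathbb{R}^2$ of the form $\varphi(x,y)=(\alpha^{-1}x,\beta^{-1}y)$ for some positive reals $\alpha,\beta$, such that $\varphi(A)$ and $\varphi(B)$ are standard trapezoids $T(m,h,c,d)$ and $T(n,h',c,d)$ respectively, with common slopes $c$ and $d$ (for some integers $h,h'\ge 1$).
   Context: $A+B=\{a+b: a\in A, b\in B\}$ and $|X|$ denotes cardinality. Standard trapezoid: let $m\ge 1$, $h\ge 1$ be integers and $c,d\in\mathbb{R}$ with $c-d\in\mathbb{Z}$ and $h-1+(m-1)c\ge (m-1)d$. A standard trapezoid $T(m,h,c,d)$ is any translate of the finite set $T$ consisting of the points $(x,y)$ of the lattice $\{a(0,1)+b(1,d): a,b\in\mathbb{Z}\}$ satisfying $0\le x\le m-1$, $y\le cx+h-1$ and $y\ge dx$. *)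

theory Defs
  imports "HOL-Analysis.Analysis"
begin

definition sumset :: "(real \<times> real) set \<Rightarrow> (real \<times> real) set \<Rightarrow> (real \<times> real) set" where
  "sumset A B = {a + b | a b. a \<in> A \<and> b \<in> B}"

text \<open>The set T from the definition of a standard trapezoid: points of the lattice
  generated by (0,1) and (1,d) with 0 <= x <= m-1, y <= c x + h - 1, y >= d x.\<close>
definition trap_base :: "nat \<Rightarrow> int \<Rightarrow> real \<Rightarrow> real \<Rightarrow> (real \<times> real) set" where
  "trap_base m h c d =
     {(x, y). (\<exists>a b :: int. (x, y) = (real_of_int b, real_of_int a + real_of_int b * d))
              \<and> 0 \<le> x \<and> x \<le> real m - 1 \<and> y \<le> c * x + real_of_int h - 1 \<and> y \<ge> d * x}"

definition std_trapezoid :: "(real \<times> real) set \<Rightarrow> nat \<Rightarrow> int \<Rightarrow> real \<Rightarrow> real \<Rightarrow> bool" where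
  "std_trapezoid S m h c d \<longleftrightarrow>
     m \<ge> 1 \<and> h \<ge> 1 \<and> c - d \<in> \<int> \<and>
     real_of_int h - 1 + (real m - 1) * c \<ge> (real m - 1) * d \<and>
     (\<exists>t. S = (\<lambda>p. t + p) ` trap_base m h c d)"

end

theory Submission
  imports Defs
begin


definition sum1 :: "real set \<Rightarrow> real set \<Rightarrow> real set" where
  "sum1 S T = {s + t | s t. s \<in> S \<and> t \<in> T}"

lemma sum1_img: "sum1 S T = (\<lambda>(s,t). s+t) ` (S \<times> T)"
  by (auto simp: sum1_def)

lemma finite_sum1: "finite S \<Longrightarrow> finite T \<Longrightarrow> finite (sum1 S T)"
  by (simp add: sum1_img)

lemma sum1_comm: "sum1 S T = sum1 T S"
  unfolding sum1_def by (auto, metis add.commute, metis add.commute)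

lemma sum1_ne: "S \<noteq> {} \<Longrightarrow> T \<noteq> {} \<Longrightarrow> sum1 S T \<noteq> {}"
  unfolding sum1_def by auto

lemma card_sum1:
  assumes "finite S" "finite T" "S \<noteq> {}" "T \<noteq> {}"
  shows "card S + card T - 1 \<le> card (sum1 S T)"
proof -
  let ?U = "(\<lambda>t. Max S + t) ` T" and ?W = "(\<lambda>s. s + Min T) ` S"
  have cU: "card ?U = card T" by (rule card_image) (auto simp: inj_on_def)
  have cW: "card ?W = card S" by (rule card_image) (auto simp: inj_on_def)
  have int: "?U \<inter> ?W = {Max S + Min T}"
  proof
    show "?U \<inter> ?W \<subseteq> {Max S + Min T}"
    proof
      fix z assume "z \<in> ?U \<inter> ?W"
      then obtain t s where t: "t \<in> T" "z = Max S + t" and s: "s \<in> S" "z = s + Min T" by auto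
      have "t \<ge> Min T" using t assms by auto
      moreover have "s \<le> Max S" using s assms by auto
      ultimately show "z \<in> {Max S + Min T}" using t s by auto
    qed
    show "{Max S + Min T} \<subseteq> ?U \<inter> ?W" using assms by auto
  qed
  have cUI: "card ?U + card ?W = card (?U \<union> ?W) + card (?U \<inter> ?W)"
    by (rule card_Un_Int) (use assms in auto)
  have MS: "Max S \<in> S" "Min T \<in> T" using assms by auto
  moreover have "?U \<union> ?W \<subseteq> sum1 S T" using MS unfolding sum1_def by blast
  hence "card (?U \<union> ?W) \<le> card (sum1 S T)" using finite_sum1 assms card_mono by blast
  ultimately show ?thesis using int cU cW cUI by simp
qed

lemma Min_sum1:
  assumes "finite S" "finite T" "S \<noteq> {}" "T \<noteq> {}"
  shows "Min (sum1 S T) = Min S + Min T"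
proof (rule Min_eqI)
  show "finite (sum1 S T)" using assms finite_sum1 by auto
  show "\<And>y. y \<in> sum1 S T \<Longrightarrow> Min S + Min T \<le> y"
    unfolding sum1_def using assms by (auto intro: add_mono)
  have MS: "Min S \<in> S" "Min T \<in> T" using assms by auto
  then show "Min S + Min T \<in> sum1 S T" unfolding sum1_def by blast
qed

lemma sumset_comm: "sumset A B = sumset B A"
  unfolding sumset_def by (auto, metis add.commute, metis add.commute)



lemma finite_sumset: "finite X \<Longrightarrow> finite Y \<Longrightarrow> finite (sumset X Y)"
  unfolding sumset_def by (rule finite_image_set2) simp_all

locale twocol =
  fixes A B :: "(real \<times> real) set" and xs ys :: "real list"
  assumes finA: "finite A" and finB: "finite B"
    and sx: "sorted_wrt (<) xs" and sy: "sorted_wrt (<) ys"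
    and setx: "set xs = fst ` A" and sety: "set ys = fst ` B"

context twocol begin

definition "colA i = {y. (xs!i, y) \<in> A}"
definition "colB j = {y. (ys!j, y) \<in> B}"
definition "preA i = {p \<in> A. fst p \<le> xs!i}"
definition "preB j = {p \<in> B. fst p \<le> ys!j}"
definition "C i j = sumset (preA i) (preB j)"
definition "Col i j = {xs!i + ys!j} \<times> sum1 (colA i) (colB j)"
end

sublocale twocol \<subseteq> sw: twocol B A ys xs
  by unfold_locales (use twocol_axioms in \<open>auto simp: twocol_def\<close>)

context twocol begin

lemma sw_colA: "sw.colA = colB" by (rule ext) (simp add: sw.colA_def colB_def)
lemma sw_colB: "sw.colB = colA" by (rule ext) (simp add: sw.colB_def colA_def)
lemma sw_preA: "sw.preA = preB" by (rule ext) (simp add: sw.preA_def preB_def)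
lemma sw_preB: "sw.preB = preA" by (rule ext) (simp add: sw.preB_def preA_def)
lemma sw_C: "sw.C j i = C i j" by (simp add: sw.C_def C_def sw_preA sw_preB sumset_comm)
lemma sw_Col: "sw.Col j i = Col i j"
  by (simp add: sw.Col_def Col_def sw_colA sw_colB sum1_comm add.commute)

lemma xlt: "i < j \<Longrightarrow> j < length xs \<Longrightarrow> xs!i < xs!j"
  using sx by (simp add: sorted_wrt_iff_nth_less)

lemma xle_iff: "i < length xs \<Longrightarrow> j < length xs \<Longrightarrow> xs!i \<le> xs!j \<longleftrightarrow> i \<le> j"
  by (cases i j rule: linorder_cases) (auto dest: xlt)

lemma fstA: "p \<in> A \<Longrightarrow> \<exists>k < length xs. fst p = xs!k"
  using setx by (metis image_eqI in_set_conv_nth)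

lemma colA_ne: "i < length xs \<Longrightarrow> colA i \<noteq> {}"
proof -
  assume "i < length xs"
  then have "xs!i \<in> fst ` A" using setx nth_mem by metis
  then obtain p where "p \<in> A" "fst p = xs!i" by auto
  then have "snd p \<in> colA i" unfolding colA_def by (metis prod.collapse mem_Collect_eq)
  then show ?thesis by auto
qed

lemma colA_fin: "finite (colA i)"
proof -
  have "colA i \<subseteq> snd ` A" unfolding colA_def by force
  then show ?thesis using finA finite_subset by blast
qed

lemma preA_Suc: "Suc i < length xs \<Longrightarrow> preA (Suc i) = preA i \<union> ({xs!Suc i} \<times> colA (Suc i))"
proof -
  assume a: "Suc i < length xs"
  have lt: "xs!i < xs!Suc i" using a xlt by auto
  show ?thesis
  proof
    show "preA (Suc i) \<subseteq> preA i \<union> ({xs!Suc i} \<times> colA (Suc i))"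
    proof
      fix p assume p: "p \<in> preA (Suc i)"
      then have pA: "p \<in> A" and le: "fst p \<le> xs!Suc i" unfolding preA_def by auto
      obtain k where k: "k < length xs" "fst p = xs!k" using fstA pA by blast
      have "k \<le> Suc i" using xle_iff[OF k(1) a] le k by auto
      show "p \<in> preA i \<union> ({xs!Suc i} \<times> colA (Suc i))"
      proof (cases "k \<le> i")
        case True
        then have "fst p \<le> xs!i" using xle_iff[of k i] k a by auto
        then show ?thesis using pA unfolding preA_def by auto
      next
        case False
        then have "k = Suc i" using \<open>k \<le> Suc i\<close> by auto
        then have "(xs!Suc i, snd p) \<in> A" using k pA by (metis prod.collapse)
        then show ?thesis using k \<open>k = Suc i\<close> unfolding colA_def by (cases p) auto
      qed
    qed
    show "preA i \<union> ({xs!Suc i} \<times> colA (Suc i)) \<subseteq> preA (Suc i)"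
      using lt unfolding preA_def colA_def by auto
  qed
qed

lemma preA_disj: "Suc i < length xs \<Longrightarrow> preA i \<inter> ({xs!Suc i} \<times> colA (Suc i)) = {}"
  using xlt[of i "Suc i"] unfolding preA_def by auto

lemma preA_0: "0 < length xs \<Longrightarrow> preA 0 = {xs!0} \<times> colA 0"
proof
  assume a: "0 < length xs"
  show "preA 0 \<subseteq> {xs!0} \<times> colA 0"
  proof
    fix p assume p: "p \<in> preA 0"
    then have pA: "p \<in> A" and le: "fst p \<le> xs!0" unfolding preA_def by auto
    obtain k where k: "k < length xs" "fst p = xs!k" using fstA pA by blast
    have "k = 0" using xle_iff[OF k(1) a] le k by auto
    then show "p \<in> {xs!0} \<times> colA 0" using k pA unfolding colA_def by (cases p) auto
  qed
  show "{xs!0} \<times> colA 0 \<subseteq> preA 0" unfolding preA_def colA_def by auto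
qed

lemma preA_fin: "finite (preA i)" using finA unfolding preA_def by auto

lemma card_preA_Suc: "Suc i < length xs \<Longrightarrow> card (preA (Suc i)) = card (preA i) + card (colA (Suc i))"
proof -
  assume a: "Suc i < length xs"
  have "card ({xs!Suc i} \<times> colA (Suc i)) = card (colA (Suc i))" by (simp add: card_cartesian_product)
  then show ?thesis using preA_Suc[OF a] preA_disj[OF a] preA_fin colA_fin
    by (simp add: card_Un_disjoint)
qed

lemma card_preA_0: "0 < length xs \<Longrightarrow> card (preA 0) = card (colA 0)"
  using preA_0 by (simp add: card_cartesian_product)

lemma preA_last: "0 < length xs \<Longrightarrow> preA (length xs - 1) = A"
proof -
  assume a: "0 < length xs"
  have "\<forall>p\<in>A. fst p \<le> xs!(length xs - 1)"
  proof
    fix p assume "p \<in> A"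
    then obtain k where k: "k < length xs" "fst p = xs!k" using fstA by blast
    then show "fst p \<le> xs!(length xs - 1)" using xle_iff[of k "length xs - 1"] a by auto
  qed
  then show ?thesis unfolding preA_def by auto
qed

lemma C_fst: "p \<in> C i j \<Longrightarrow> fst p \<le> xs!i + ys!j"
  unfolding C_def sumset_def preA_def preB_def by (auto intro: add_mono)

end
context twocol begin

lemma C_fin: "finite (C i j)"
  unfolding C_def using finite_sumset preA_fin sw.preA_fin sw_preA by metis

lemma C_col: "(xs!i + ys!j, z) \<in> C i j \<longleftrightarrow> z \<in> sum1 (colA i) (colB j)"
proof
  assume "(xs!i + ys!j, z) \<in> C i j"
  then obtain a b where ab: "(xs!i + ys!j, z) = a + b" "a \<in> preA i" "b \<in> preB j"
    unfolding C_def sumset_def by auto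
  have "fst a \<le> xs!i" "fst b \<le> ys!j" using ab unfolding preA_def preB_def by auto
  moreover have "fst a + fst b = xs!i + ys!j" using ab(1) by (metis fst_add fst_conv)
  ultimately have e: "fst a = xs!i" "fst b = ys!j" by linarith+
  have "snd a \<in> colA i" using ab e unfolding preA_def colA_def by (cases a) auto
  moreover have "snd b \<in> colB j" using ab e unfolding preB_def colB_def by (cases b) auto
  moreover have "z = snd a + snd b" using ab(1) by (metis snd_add snd_conv)
  ultimately show "z \<in> sum1 (colA i) (colB j)" unfolding sum1_def by blast
next
  assume "z \<in> sum1 (colA i) (colB j)"
  then obtain s t where st: "z = s + t" "s \<in> colA i" "t \<in> colB j" unfolding sum1_def by auto
  have "(xs!i, s) \<in> preA i" using st unfolding preA_def colA_def by auto
  moreover have "(ys!j, t) \<in> preB j" using st unfolding preB_def colB_def by auto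
  moreover have "(xs!i + ys!j, z) = (xs!i, s) + (ys!j, t)" using st by simp
  ultimately show "(xs!i + ys!j, z) \<in> C i j" unfolding C_def sumset_def by blast
qed

lemma Col_sub: "Col i j \<subseteq> C i j"
  unfolding Col_def using C_col by auto

lemma C_mono: "Suc i < length xs \<Longrightarrow> C i j \<subseteq> C (Suc i) j"
  using preA_Suc unfolding C_def sumset_def by blast

lemma C_disj: "Suc i < length xs \<Longrightarrow> C i j \<inter> Col (Suc i) j = {}"
proof -
  assume a: "Suc i < length xs"
  have "xs!i < xs!Suc i" using a xlt by auto
  then show ?thesis using C_fst[of _ i j] unfolding Col_def by fastforce
qed

lemma card_Col: "card (Col i j) = card (sum1 (colA i) (colB j))"
  unfolding Col_def by (simp add: card_cartesian_product)

lemma Col_fin: "finite (Col i j)"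
  unfolding Col_def using finite_sum1 colA_fin sw.colA_fin sw_colA by simp

lemma C_step: "Suc i < length xs \<Longrightarrow>
   card (C i j) + card (sum1 (colA (Suc i)) (colB j)) \<le> card (C (Suc i) j)"
proof -
  assume a: "Suc i < length xs"
  have "card (C i j \<union> Col (Suc i) j) = card (C i j) + card (Col (Suc i) j)"
    using C_disj[OF a] C_fin Col_fin by (simp add: card_Un_disjoint)
  moreover have "C i j \<union> Col (Suc i) j \<subseteq> C (Suc i) j" using C_mono[OF a] Col_sub by auto
  ultimately show ?thesis using card_mono[OF C_fin] card_Col by metis
qed

lemma C_step_eq: "Suc i < length xs \<Longrightarrow>
   card (C (Suc i) j) = card (C i j) + card (sum1 (colA (Suc i)) (colB j)) \<Longrightarrow>
   C i j = C (Suc i) j - Col (Suc i) j"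
proof -
  assume a: "Suc i < length xs" and e: "card (C (Suc i) j) = card (C i j) + card (sum1 (colA (Suc i)) (colB j))"
  have "card (C i j \<union> Col (Suc i) j) = card (C i j) + card (Col (Suc i) j)"
    using C_disj[OF a] C_fin Col_fin by (simp add: card_Un_disjoint)
  moreover have sub: "C i j \<union> Col (Suc i) j \<subseteq> C (Suc i) j" using C_mono[OF a] Col_sub by auto
  ultimately have "C i j \<union> Col (Suc i) j = C (Suc i) j"
    using card_subset_eq[OF C_fin sub] e card_Col by metis
  then show ?thesis using C_disj[OF a] by auto
qed

lemma C00: "0 < length xs \<Longrightarrow> 0 < length ys \<Longrightarrow> C 0 0 = Col 0 0"
proof
  assume a: "0 < length xs" "0 < length ys"
  show "Col 0 0 \<subseteq> C 0 0" by (rule Col_sub)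
  show "C 0 0 \<subseteq> Col 0 0"
  proof
    fix p assume p: "p \<in> C 0 0"
    then obtain a b where ab: "p = a + b" "a \<in> preA 0" "b \<in> preB 0"
      unfolding C_def sumset_def by auto
    have "a \<in> {xs!0} \<times> colA 0" using ab preA_0 a by auto
    moreover have "b \<in> {ys!0} \<times> colB 0" using ab sw.preA_0 a sw_preA sw_colA by auto
    ultimately show "p \<in> Col 0 0" using ab unfolding Col_def sum1_def by (cases a, cases b) auto
  qed
qed

end


lemma realid:
  fixes p q Sa Sb a b :: real
  assumes "p > 0" "q > 0"
  shows "(p+q)*((p+q+1)*((Sa+a)/(p+1) + (Sb+b)/(q+1) - 1)) =
     p*((p+q)*(Sa/p + (Sb+b)/(q+1) - 1) + (a + b - 1)) + q*((p+q)*((Sa+a)/(p+1) + Sb/q - 1) + (a+b-1))"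
proof -
  have n: "p+1 \<noteq> 0" "q+1 \<noteq> 0" "p \<noteq> 0" "q \<noteq> 0" using assms by auto
  have e1: "p*(Sa/p) = Sa" "q*(Sb/q) = Sb" using n by auto
  have "p*((p+q)*(Sa/p + (Sb+b)/(q+1) - 1) + (a + b - 1)) = (p+q)*(p*(Sa/p)) + p*(p+q)*((Sb+b)/(q+1)) - p*(p+q) + p*(a+b-1)"
    by (simp only: algebra_simps)
  also have "... = (p+q)*Sa + p*(p+q)*((Sb+b)/(q+1)) - p*(p+q) + p*(a+b-1)" by (simp only: e1)
  finally have f1: "p*((p+q)*(Sa/p + (Sb+b)/(q+1) - 1) + (a + b - 1)) = (p+q)*Sa + p*(p+q)*((Sb+b)/(q+1)) - p*(p+q) + p*(a+b-1)" .
  have "q*((p+q)*((Sa+a)/(p+1) + Sb/q - 1) + (a+b-1)) = (p+q)*(q*(Sb/q)) + q*(p+q)*((Sa+a)/(p+1)) - q*(p+q) + q*(a+b-1)"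
    by (simp only: algebra_simps)
  also have "... = (p+q)*Sb + q*(p+q)*((Sa+a)/(p+1)) - q*(p+q) + q*(a+b-1)" by (simp only: e1)
  finally have f2: "q*((p+q)*((Sa+a)/(p+1) + Sb/q - 1) + (a+b-1)) = (p+q)*Sb + q*(p+q)*((Sa+a)/(p+1)) - q*(p+q) + q*(a+b-1)" .
  define X where "X = (Sa+a)/(p+1)"
  define Y where "Y = (Sb+b)/(q+1)"
  have sa: "Sa = (p+1)*X - a" "Sb = (q+1)*Y - b" using n unfolding X_def Y_def by auto
  have "(p+q)*((p+q+1)*(X + Y - 1)) = (p+q)*Sa + p*(p+q)*Y - p*(p+q) + p*(a+b-1) + ((p+q)*Sb + q*(p+q)*X - q*(p+q) + q*(a+b-1))"
    unfolding sa by (simp add: algebra_simps)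
  then show ?thesis using f1 f2 unfolding X_def Y_def by simp
qed

lemma realid2:
  fixes p Sa a b :: real
  assumes "p > 0"
  shows "(p+1)*((Sa+a)/(p+1) + b - 1) = p*(Sa/p + b - 1) + (a + b - 1)"
  using assms by (simp add: field_simps)

context twocol begin
definition "V i j = (real i + real j + 1) * (real (card (preA i)) / (real i + 1) + real (card (preB j)) / (real j + 1) - 1)"
definition "N i j = real (card (C i j))"
end

context twocol begin

lemma sw_V: "sw.V j i = V i j"
  by (simp add: sw.V_def V_def sw_preA sw_preB algebra_simps)
lemma sw_N: "sw.N j i = N i j"
  by (simp add: sw.N_def N_def sw_C)

lemma stepA: "Suc i < length xs \<Longrightarrow> j < length ys \<Longrightarrow>
  N i j + (real (card (colA (Suc i))) + real (card (colB j)) - 1) \<le> N (Suc i) j"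
proof -
  assume a: "Suc i < length xs" "j < length ys"
  have ne: "colA (Suc i) \<noteq> {}" "colB j \<noteq> {}" using colA_ne a sw.colA_ne sw_colA by auto
  have "card (colA (Suc i)) + card (colB j) - 1 \<le> card (sum1 (colA (Suc i)) (colB j))"
    using card_sum1 ne colA_fin sw.colA_fin sw_colA by metis
  moreover have "card (colA (Suc i)) \<ge> 1" using ne colA_fin by (simp add: Suc_leI card_gt_0_iff)
  ultimately have "real (card (colA (Suc i))) + real (card (colB j)) - 1 \<le> real (card (sum1 (colA (Suc i)) (colB j)))"
    by linarith
  then show ?thesis using C_step[OF a(1), of j] unfolding N_def by linarith
qed

lemma N00: "0 < length xs \<Longrightarrow> 0 < length ys \<Longrightarrow> N 0 0 = real (card (sum1 (colA 0) (colB 0)))"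
  unfolding N_def using C00 card_Col by simp

lemma base: "0 < length xs \<Longrightarrow> 0 < length ys \<Longrightarrow>
   real (card (colA 0)) + real (card (colB 0)) - 1 \<le> real (card (sum1 (colA 0) (colB 0)))"
proof -
  assume a: "0 < length xs" "0 < length ys"
  have ne: "colA 0 \<noteq> {}" "colB 0 \<noteq> {}" using colA_ne a sw.colA_ne sw_colA by auto
  have "card (colA 0) + card (colB 0) - 1 \<le> card (sum1 (colA 0) (colB 0))"
    using card_sum1 ne colA_fin sw.colA_fin sw_colA by metis
  moreover have "card (colA 0) \<ge> 1" using ne colA_fin by (simp add: Suc_leI card_gt_0_iff)
  ultimately show ?thesis by linarith
qed

lemma V00: "0 < length xs \<Longrightarrow> 0 < length ys \<Longrightarrow> V 0 0 = real (card (colA 0)) + real (card (colB 0)) - 1"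
  unfolding V_def using card_preA_0 sw.card_preA_0 sw_preA sw_colA by simp

lemma VS0: "Suc i < length xs \<Longrightarrow> 0 < length ys \<Longrightarrow>
   V (Suc i) 0 = V i 0 + (real (card (colA (Suc i))) + real (card (colB 0)) - 1)"
proof -
  assume a: "Suc i < length xs" "0 < length ys"
  have "real (card (preA (Suc i))) = real (card (preA i)) + real (card (colA (Suc i)))"
    using card_preA_Suc[OF a(1)] by simp
  moreover have "card (preB 0) = card (colB 0)" using sw.card_preA_0 a sw_preA sw_colA by simp
  moreover have "real (Suc i) = real i + 1" by simp
  ultimately show ?thesis unfolding V_def
    using realid2[of "real i + 1" "real (card (preA i))" "real (card (colA (Suc i)))" "real (card (colB 0))"]
    by (simp add: algebra_simps)
qed

lemma VSS: "Suc i < length xs \<Longrightarrow> Suc j < length ys \<Longrightarrow>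
   (real i + real j + 2) * V (Suc i) (Suc j) =
   (real i + 1) * (V i (Suc j) + (real (card (colA (Suc i))) + real (card (colB (Suc j))) - 1)) +
   (real j + 1) * (V (Suc i) j + (real (card (colA (Suc i))) + real (card (colB (Suc j))) - 1))"
proof -
  assume a: "Suc i < length xs" "Suc j < length ys"
  have "real (card (preA (Suc i))) = real (card (preA i)) + real (card (colA (Suc i)))"
    using card_preA_Suc[OF a(1)] by simp
  moreover have "real (card (preB (Suc j))) = real (card (preB j)) + real (card (colB (Suc j)))"
    using sw.card_preA_Suc[OF a(2)] sw_preA sw_colA by simp
  ultimately show ?thesis unfolding V_def
    using realid[of "real i + 1" "real j + 1" "real (card (preA i))" "real (card (colA (Suc i)))"
       "real (card (preB j))" "real (card (colB (Suc j)))"]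
    by (simp add: algebra_simps)
qed

end


lemma comb_le:
  fixes P Q V V1 V2 N N1 N2 w c :: real
  assumes "P > 0" "Q > 0" "(P+Q)*V = P*(V1+w) + Q*(V2+w)"
    "V1 \<le> N1" "V2 \<le> N2" "w \<le> c" "N1 + c \<le> N" "N2 + c \<le> N"
  shows "V \<le> N"
proof -
  have "P*(V1+w) \<le> P*N" using assms by (intro mult_left_mono) auto
  moreover have "Q*(V2+w) \<le> Q*N" using assms by (intro mult_left_mono) auto
  moreover have "(P+Q)*N = P*N + Q*N" by (simp add: algebra_simps)
  ultimately have "(P+Q)*V \<le> (P+Q)*N" using assms(3) by linarith
  then show ?thesis using assms by (smt (verit) mult_le_cancel_left_pos)
qed

lemma comb_eq:
  fixes P Q V V1 V2 N N1 N2 w c :: real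
  assumes "P > 0" "Q > 0" "(P+Q)*V = P*(V1+w) + Q*(V2+w)"
    "V1 \<le> N1" "V2 \<le> N2" "w \<le> c" "N1 + c \<le> N" "N2 + c \<le> N" "N = V"
  shows "N1 = V1 \<and> c = w \<and> N = N1 + c \<and> N2 = V2 \<and> N = N2 + c"
proof -
  have a1: "P*(V1+w) \<le> P*N" using assms by (intro mult_left_mono) auto
  have a2: "Q*(V2+w) \<le> Q*N" using assms by (intro mult_left_mono) auto
  have "(P+Q)*V = P*N + Q*N" using assms(9) by (simp add: algebra_simps)
  then have "P*(V1+w) = P*N" "Q*(V2+w) = Q*N" using a1 a2 assms(3) by linarith+
  then have "V1 + w = N" "V2 + w = N" using assms(1,2) by auto
  then show ?thesis using assms by linarith
qed

context twocol begin

lemma stepB: "i < length xs \<Longrightarrow> Suc j < length ys \<Longrightarrow>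
  N i j + (real (card (colA i)) + real (card (colB (Suc j))) - 1) \<le> N i (Suc j)"
  using sw.stepA[of j i] by (simp add: sw_N sw_colA sw_colB add.commute)

lemma V0S: "0 < length xs \<Longrightarrow> Suc j < length ys \<Longrightarrow>
   V 0 (Suc j) = V 0 j + (real (card (colA 0)) + real (card (colB (Suc j))) - 1)"
  using sw.VS0[of j] by (simp add: sw_V sw_colA sw_colB add.commute)

lemma C_stepB: "Suc j < length ys \<Longrightarrow>
   card (C i j) + card (sum1 (colA i) (colB (Suc j))) \<le> card (C i (Suc j))"
  using sw.C_step[of j i] by (simp add: sw_C sw_colA sw_colB sum1_comm)

lemma C_step_eqB: "Suc j < length ys \<Longrightarrow>
   card (C i (Suc j)) = card (C i j) + card (sum1 (colA i) (colB (Suc j))) \<Longrightarrow>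
   C i j = C i (Suc j) - Col i (Suc j)"
  using sw.C_step_eq[of j i] by (simp add: sw_C sw_Col sw_colA sw_colB sum1_comm)

lemma csum_ge: "i < length xs \<Longrightarrow> j < length ys \<Longrightarrow>
   real (card (colA i)) + real (card (colB j)) - 1 \<le> real (card (sum1 (colA i) (colB j)))"
proof -
  assume a: "i < length xs" "j < length ys"
  have ne: "colA i \<noteq> {}" "colB j \<noteq> {}" using colA_ne a sw.colA_ne sw_colA by auto
  have "card (colA i) + card (colB j) - 1 \<le> card (sum1 (colA i) (colB j))"
    using card_sum1 ne colA_fin sw.colA_fin sw_colA by metis
  moreover have "card (colA i) \<ge> 1" using ne colA_fin by (simp add: Suc_leI card_gt_0_iff)
  ultimately show ?thesis by linarith
qed

lemma N_ge_V: "i < length xs \<Longrightarrow> j < length ys \<Longrightarrow> V i j \<le> N i j"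
proof (induction i arbitrary: j)
  case 0
  then show ?case
  proof (induction j)
    case 0 then show ?case using V00 N00 base by simp
  next
    case (Suc j)
    then have "V 0 j \<le> N 0 j" by simp
    then show ?case using V0S[of j] stepB[of 0 j] Suc.prems by linarith
  qed
next
  case (Suc i)
  note outer = Suc
  show ?case using Suc.prems
  proof (induction j)
    case 0
    have "V i 0 \<le> N i 0" using outer 0 by simp
    then show ?case using VS0[of i] stepA[of i 0] 0 by linarith
  next
    case (Suc j)
    have h1: "V i (Suc j) \<le> N i (Suc j)" using outer Suc by simp
    have h2: "V (Suc i) j \<le> N (Suc i) j" using Suc by simp
    let ?c = "real (card (sum1 (colA (Suc i)) (colB (Suc j))))"
    let ?w = "real (card (colA (Suc i))) + real (card (colB (Suc j))) - 1"
    have s1: "N i (Suc j) + ?c \<le> N (Suc i) (Suc j)"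
      using C_step[of i "Suc j"] Suc.prems unfolding N_def by simp
    have s2: "N (Suc i) j + ?c \<le> N (Suc i) (Suc j)"
      using C_stepB[of j "Suc i"] Suc.prems unfolding N_def by simp
    have cw: "?w \<le> ?c" using csum_ge Suc.prems by simp
    have id: "((real i + 1) + (real j + 1)) * V (Suc i) (Suc j) =
      (real i + 1) * (V i (Suc j) + ?w) + (real j + 1) * (V (Suc i) j + ?w)"
      using VSS[of i j] Suc.prems by (simp add: algebra_simps)
    show ?case by (rule comb_le[OF _ _ id h1 h2 cw s1 s2]) auto
  qed
qed

lemma eqA: "Suc i < length xs \<Longrightarrow> j < length ys \<Longrightarrow> N (Suc i) j = V (Suc i) j \<Longrightarrow>
   N i j = V i j \<and> card (C (Suc i) j) = card (C i j) + card (sum1 (colA (Suc i)) (colB j)) \<and>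
   real (card (sum1 (colA (Suc i)) (colB j))) = real (card (colA (Suc i))) + real (card (colB j)) - 1"
proof -
  assume a: "Suc i < length xs" "j < length ys" and e: "N (Suc i) j = V (Suc i) j"
  let ?c = "real (card (sum1 (colA (Suc i)) (colB j)))"
  let ?w = "real (card (colA (Suc i))) + real (card (colB j)) - 1"
  have s1: "N i j + ?c \<le> N (Suc i) j"
    using C_step[of i j] a unfolding N_def by simp
  have cw: "?w \<le> ?c" using csum_ge a by simp
  have h1: "V i j \<le> N i j" using N_ge_V a by simp
  have "N i j = V i j \<and> ?c = ?w \<and> N (Suc i) j = N i j + ?c"
  proof (cases j)
    case 0
    then show ?thesis using VS0[of i] a e s1 cw h1 by simp
  next
    case (Suc j')
    have h2: "V (Suc i) j' \<le> N (Suc i) j'" using N_ge_V a Suc by simp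
    have s2: "N (Suc i) j' + ?c \<le> N (Suc i) j"
      using C_stepB[of j' "Suc i"] a Suc unfolding N_def by simp
    have id: "((real i + 1) + (real j' + 1)) * V (Suc i) j =
      (real i + 1) * (V i j + ?w) + (real j' + 1) * (V (Suc i) j' + ?w)"
      using VSS[of i j'] a Suc by (simp add: algebra_simps)
    show ?thesis using comb_eq[OF _ _ id h1 h2 cw s1 s2 e] by auto
  qed
  then show ?thesis unfolding N_def by simp
qed

end

context twocol begin

lemma eqB: "i < length xs \<Longrightarrow> Suc j < length ys \<Longrightarrow> N i (Suc j) = V i (Suc j) \<Longrightarrow>
   N i j = V i j \<and> card (C i (Suc j)) = card (C i j) + card (sum1 (colA i) (colB (Suc j))) \<and>
   real (card (sum1 (colA i) (colB (Suc j)))) = real (card (colA i)) + real (card (colB (Suc j))) - 1"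
  using sw.eqA[of j i] by (simp add: sw_N sw_V sw_C sw_colA sw_colB sum1_comm add.commute)

lemma downA: "i + d < length xs \<Longrightarrow> j < length ys \<Longrightarrow> N (i+d) j = V (i+d) j \<Longrightarrow> N i j = V i j"
proof (induction d)
  case 0 then show ?case by simp
next
  case (Suc d)
  then have "N (i+d) j = V (i+d) j" using eqA[of "i+d" j] by simp
  then show ?case using Suc by simp
qed

lemma downB: "i < length xs \<Longrightarrow> j + d < length ys \<Longrightarrow> N i (j+d) = V i (j+d) \<Longrightarrow> N i j = V i j"
proof (induction d)
  case 0 then show ?case by simp
next
  case (Suc d)
  then have "N i (j+d) = V i (j+d)" using eqB[of i "j+d"] by simp
  then show ?case using Suc by simp
qed

lemma all_eq:
  assumes "0 < length xs" "0 < length ys"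
    "N (length xs - 1) (length ys - 1) = V (length xs - 1) (length ys - 1)"
    "i < length xs" "j < length ys"
  shows "N i j = V i j"
proof -
  have "N i (length ys - 1) = V i (length ys - 1)"
    using downA[of i "length xs - 1 - i" "length ys - 1"] assms by simp
  then show ?thesis using downB[of i j "length ys - 1 - j"] assms by simp
qed

lemma colsum_eq:
  assumes "0 < length xs" "0 < length ys"
    "N (length xs - 1) (length ys - 1) = V (length xs - 1) (length ys - 1)"
    "i < length xs" "j < length ys"
  shows "real (card (sum1 (colA i) (colB j))) = real (card (colA i)) + real (card (colB j)) - 1"
proof (cases i)
  case (Suc i')
  then show ?thesis using eqA[of i' j] all_eq[OF assms(1-3)] assms(4,5) by simp
next
  case 0
  show ?thesis
  proof (cases j)
    case 0
    then show ?thesis using \<open>i = 0\<close> all_eq[OF assms(1-3), of 0 0] V00 N00 assms by simp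
  next
    case (Suc j')
    then show ?thesis using \<open>i = 0\<close> eqB[of 0 j'] all_eq[OF assms(1-3)] assms(4,5) by simp
  qed
qed

lemma C_eq:
  assumes "0 < length xs" "0 < length ys"
    "N (length xs - 1) (length ys - 1) = V (length xs - 1) (length ys - 1)"
    "Suc i < length xs" "Suc j < length ys"
  shows "C i (Suc j) = C (Suc i) j"
proof -
  have e: "N (Suc i) (Suc j) = V (Suc i) (Suc j)" using all_eq[OF assms(1-3)] assms by simp
  have "C i (Suc j) = C (Suc i) (Suc j) - Col (Suc i) (Suc j)"
    using C_step_eq[of i "Suc j"] eqA[OF assms(4) assms(5) e] assms by simp
  moreover have "C (Suc i) j = C (Suc i) (Suc j) - Col (Suc i) (Suc j)"
    using C_step_eqB[of j "Suc i"] eqB[OF assms(4) assms(5) e] assms by simp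
  ultimately show ?thesis by simp
qed

lemma shift:
  assumes "Suc i < length xs" "Suc j < length ys" "C i (Suc j) = C (Suc i) j"
  shows "xs!Suc i + ys!j = xs!i + ys!Suc j \<and>
         sum1 (colA (Suc i)) (colB j) = sum1 (colA i) (colB (Suc j))"
proof -
  have ne1: "sum1 (colA (Suc i)) (colB j) \<noteq> {}"
    using sum1_ne colA_ne sw.colA_ne sw_colA assms by auto
  have ne2: "sum1 (colA i) (colB (Suc j)) \<noteq> {}"
    using sum1_ne colA_ne sw.colA_ne sw_colA assms by auto
  obtain z where z: "z \<in> sum1 (colA (Suc i)) (colB j)" using ne1 by auto
  obtain z' where z': "z' \<in> sum1 (colA i) (colB (Suc j))" using ne2 by auto
  have "(xs!Suc i + ys!j, z) \<in> C i (Suc j)" using C_col z assms(3) by simp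
  then have l1: "xs!Suc i + ys!j \<le> xs!i + ys!Suc j" using C_fst by fastforce
  have "(xs!i + ys!Suc j, z') \<in> C (Suc i) j" using C_col z' assms(3) by metis
  then have l2: "xs!i + ys!Suc j \<le> xs!Suc i + ys!j" using C_fst by fastforce
  have ex: "xs!Suc i + ys!j = xs!i + ys!Suc j" using l1 l2 by linarith
  have "sum1 (colA (Suc i)) (colB j) = sum1 (colA i) (colB (Suc j))"
  proof (intro set_eqI)
    fix u
    have "u \<in> sum1 (colA (Suc i)) (colB j) \<longleftrightarrow> (xs!Suc i + ys!j, u) \<in> C (Suc i) j" using C_col by simp
    also have "\<dots> \<longleftrightarrow> (xs!i + ys!Suc j, u) \<in> C i (Suc j)" using ex assms(3) by simp
    also have "\<dots> \<longleftrightarrow> u \<in> sum1 (colA i) (colB (Suc j))" using C_col by simp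
    finally show "u \<in> sum1 (colA (Suc i)) (colB j) \<longleftrightarrow> u \<in> sum1 (colA i) (colB (Suc j))" .
  qed
  then show ?thesis using ex by simp
qed

end


lemma lin_seq:
  fixes u v :: "nat \<Rightarrow> real"
  assumes h: "\<And>i j. Suc i < m \<Longrightarrow> Suc j < n \<Longrightarrow> u (Suc i) + v j = u i + v (Suc j)"
    and m: "2 \<le> m" and n: "2 \<le> n"
  shows "\<forall>i<m. u i = u 0 + real i * (v 1 - v 0)" "\<forall>j<n. v j = v 0 + real j * (v 1 - v 0)"
proof -
  have du: "u (Suc i) = u i + (v 1 - v 0)" if "Suc i < m" for i
  proof -
    have e: "u (Suc i) + v 0 = u i + v (Suc 0)" by (rule h) (use that n in auto)
    then show ?thesis unfolding One_nat_def by linarith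
  qed
  have dv0: "u 1 = u 0 + (v 1 - v 0)"
  proof -
    have e: "u (Suc 0) + v 0 = u 0 + v (Suc 0)" by (rule h) (use m n in auto)
    then show ?thesis unfolding One_nat_def by linarith
  qed
  have dv: "v (Suc j) = v j + (v 1 - v 0)" if "Suc j < n" for j
  proof -
    have e: "u (Suc 0) + v j = u 0 + v (Suc j)" by (rule h) (use that m in auto)
    then show ?thesis using dv0 unfolding One_nat_def by linarith
  qed
  show "\<forall>i<m. u i = u 0 + real i * (v 1 - v 0)"
  proof (intro allI impI)
    fix i assume "i < m" then show "u i = u 0 + real i * (v 1 - v 0)"
    proof (induction i)
      case 0 then show ?case by simp
    next
      case (Suc i)
      then have "u i = u 0 + real i * (v 1 - v 0)" by simp
      moreover have "u (Suc i) = u i + (v 1 - v 0)" using du Suc.prems by blast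
      ultimately show ?case by (simp add: distrib_right)
    qed
  qed
  show "\<forall>j<n. v j = v 0 + real j * (v 1 - v 0)"
  proof (intro allI impI)
    fix j assume "j < n" then show "v j = v 0 + real j * (v 1 - v 0)"
    proof (induction j)
      case 0 then show ?case by simp
    next
      case (Suc j)
      then have "v j = v 0 + real j * (v 1 - v 0)" by simp
      moreover have "v (Suc j) = v j + (v 1 - v 0)" using dv Suc.prems by blast
      ultimately show ?case by (simp add: distrib_right)
    qed
  qed
qed

lemma sorted_nth0_Min: "finite S \<Longrightarrow> S \<noteq> {} \<Longrightarrow> sorted_list_of_set S ! 0 = Min S"
  by (simp add: sorted_list_of_set_nonempty)

lemma ap_set:
  assumes "finite S" "\<forall>k<card S. sorted_list_of_set S ! k = Min S + real k * \<beta>"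
  shows "S = {Min S + real k * \<beta> | k. k < card S}"
proof -
  have "S = set (sorted_list_of_set S)" using assms by simp
  also have "\<dots> = {sorted_list_of_set S ! k | k. k < card S}"
    by (simp add: set_conv_nth)
  also have "\<dots> = {Min S + real k * \<beta> | k. k < card S}" using assms(2) by force
  finally show ?thesis .
qed

lemma oneD:
  fixes S T :: "real set"
  assumes fS: "finite S" and fT: "finite T" and cS: "card S \<ge> 2" and cT: "card T \<ge> 2"
    and eq: "card (sum1 S T) = card S + card T - 1"
  shows "\<exists>\<beta>>0. (\<forall>k<card S. sorted_list_of_set S ! k = Min S + real k * \<beta>) \<and>
                (\<forall>k<card T. sorted_list_of_set T ! k = Min T + real k * \<beta>)"
proof -
  define xs where "xs = sorted_list_of_set S"
  define ys where "ys = sorted_list_of_set T"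
  define A' where "A' = (\<lambda>s. (s, 0::real)) ` S"
  define B' where "B' = (\<lambda>s. (s, 0::real)) ` T"
  interpret T: twocol A' B' xs ys
    by unfold_locales (auto simp: A'_def B'_def xs_def ys_def fS fT image_image)
  have lx: "length xs = card S" and ly: "length ys = card T"
    by (simp_all add: xs_def ys_def)
  have colA: "T.colA i = {0}" if "i < card S" for i
  proof -
    have "xs!i \<in> S" using that lx fS unfolding xs_def by (metis nth_mem set_sorted_list_of_set)
    then show ?thesis unfolding T.colA_def unfolding A'_def by auto
  qed
  have colB: "T.colB j = {0}" if "j < card T" for j
  proof -
    have "ys!j \<in> T" using that ly fT unfolding ys_def by (metis nth_mem set_sorted_list_of_set)
    then show ?thesis unfolding T.colB_def unfolding B'_def by auto
  qed
  have cA': "card A' = card S" unfolding A'_def by (rule card_image) (auto simp: inj_on_def)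
  have cB': "card B' = card T" unfolding B'_def by (rule card_image) (auto simp: inj_on_def)
  have pA: "T.preA (length xs - 1) = A'" using T.preA_last lx cS by simp
  have pB: "T.preB (length ys - 1) = B'" using T.sw.preA_last ly cT T.sw_preA by simp
  have sums: "sumset A' B' = (\<lambda>z. (z, 0::real)) ` (sum1 S T)"
  proof
    show "sumset A' B' \<subseteq> (\<lambda>z. (z, 0::real)) ` (sum1 S T)"
    proof
      fix p assume "p \<in> sumset A' B'"
      then obtain s t where "s \<in> S" "t \<in> T" "p = (s,0) + (t,0)"
        unfolding sumset_def A'_def B'_def by auto
      moreover have "s + t \<in> sum1 S T" using calculation unfolding sum1_def by blast
      ultimately show "p \<in> (\<lambda>z. (z, 0::real)) ` (sum1 S T)" by auto
    qed
    show "(\<lambda>z. (z, 0::real)) ` (sum1 S T) \<subseteq> sumset A' B'"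
    proof
      fix p assume "p \<in> (\<lambda>z. (z, 0::real)) ` (sum1 S T)"
      then obtain s t where st: "s \<in> S" "t \<in> T" "p = (s + t, 0)"
        unfolding sum1_def by auto
      have "(s,0) \<in> A'" "(t,0) \<in> B'" using st unfolding A'_def B'_def by auto
      moreover have "p = (s,0) + (t,0)" using st by simp
      ultimately show "p \<in> sumset A' B'" unfolding sumset_def by blast
    qed
  qed
  have "card (sumset A' B') = card (sum1 S T)"
    unfolding sums by (rule card_image) (auto simp: inj_on_def)
  then have N: "T.N (length xs - 1) (length ys - 1) = real (card S) + real (card T) - 1"
    unfolding T.N_def T.C_def pA pB using eq cS by simp
  have V: "T.V (length xs - 1) (length ys - 1) = real (card S) + real (card T) - 1"
    unfolding T.V_def pA pB cA' cB' using cS cT lx ly by (simp add: of_nat_diff)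
  have E: "T.N (length xs - 1) (length ys - 1) = T.V (length xs - 1) (length ys - 1)"
    using N V by simp
  have sh: "xs!Suc i + ys!j = xs!i + ys!Suc j" if "Suc i < card S" "Suc j < card T" for i j
    using T.shift[of i j] T.C_eq[OF _ _ E, of i j] that lx ly cS cT by simp
  note L = lin_seq[where u="\<lambda>i. xs!i" and v="\<lambda>j. ys!j" and m="card S" and n="card T", OF sh cS cT]
  have pos: "ys!1 - ys!0 > 0" using T.sw.xlt[of 0 1] ly cT by simp
  have m1: "xs!0 = Min S" using sorted_nth0_Min fS cS unfolding xs_def by (metis card.empty not_numeral_le_zero)
  have m2: "ys!0 = Min T" using sorted_nth0_Min fT cT unfolding ys_def by (metis card.empty not_numeral_le_zero)
  have L1: "\<forall>i<card S. xs!i = Min S + real i * (ys!1 - ys!0)" using L(1) m1 by metis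
  have L2: "\<forall>i<card T. ys!i = Min T + real i * (ys!1 - ys!0)" using L(2) m2 by metis
  have G1: "\<forall>k<card S. sorted_list_of_set S ! k = Min S + real k * (ys!1 - ys!0)"
    using L1 unfolding xs_def .
  have G2: "\<forall>k<card T. sorted_list_of_set T ! k = Min T + real k * (ys!1 - ys!0)"
    using L2 unfolding ys_def .
  show ?thesis by (intro exI[of _ "ys!1 - ys!0"] conjI pos G1 G2)
qed



lemma trap_char:
  assumes "c = d + of_int \<delta>"
  shows "trap_base m h c d = {(real i, real k + real i * d) | i k. i < m \<and> int k < h + \<delta> * int i}"
proof
  show "trap_base m h c d \<subseteq> {(real i, real k + real i * d) | i k. i < m \<and> int k < h + \<delta> * int i}"
  proof
    fix p assume p: "p \<in> trap_base m h c d"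
    then obtain x y a b where xy: "p = (x,y)" "x = of_int b" "y = of_int a + of_int b * d"
      and c1: "0 \<le> x" "x \<le> real m - 1" "y \<le> c * x + real_of_int h - 1" "y \<ge> d * x"
      unfolding trap_base_def by auto
    have b0: "b \<ge> 0" using c1 xy by simp
    have bm: "b < int m" using c1 xy by linarith
    have "of_int a \<le> of_int \<delta> * of_int b + real_of_int h - 1" using c1(3) xy assms by (simp add: algebra_simps)
    then have "real_of_int a \<le> real_of_int (\<delta> * b + h - 1)" by simp
    then have a1: "a \<le> \<delta> * b + h - 1" by (simp only: of_int_le_iff)
    have a0: "a \<ge> 0" using c1(4) xy by simp
    have "p = (real (nat b), real (nat a) + real (nat b) * d)" using xy a0 b0 by simp
    moreover have "nat b < m" using bm b0 by linarith
    moreover have "int (nat a) < h + \<delta> * int (nat b)" using a0 b0 a1 by (simp add: algebra_simps)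
    ultimately show "p \<in> {(real i, real k + real i * d) | i k. i < m \<and> int k < h + \<delta> * int i}" by blast
  qed
  show "{(real i, real k + real i * d) | i k. i < m \<and> int k < h + \<delta> * int i} \<subseteq> trap_base m h c d"
  proof
    fix p assume "p \<in> {(real i, real k + real i * d) | i k. i < m \<and> int k < h + \<delta> * int i}"
    then obtain i k where p: "p = (real i, real k + real i * d)" "i < m" "int k < h + \<delta> * int i" by auto
    have "int k \<le> \<delta> * int i + h - 1" using p by simp
    then have "real_of_int (int k) \<le> real_of_int (\<delta> * int i + h - 1)" by (simp only: of_int_le_iff)
    then have "real k \<le> of_int \<delta> * real i + of_int h - 1" by simp
    then have y1: "real k + real i * d \<le> c * real i + real_of_int h - 1" using assms by (simp add: algebra_simps)
    have x1: "real i \<le> real m - 1" using p by linarith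
    have y0: "real k + real i * d \<ge> d * real i" by simp
    have ex: "\<exists>a b::int. (real i, real k + real i*d) = (of_int b, of_int a + of_int b * d)"
      by (rule exI[of _ "int k"], rule exI[of _ "int i"]) simp
    show "p \<in> trap_base m h c d" unfolding trap_base_def p(1)
      using ex y1 x1 y0 by simp
  qed
qed

lemma img_collect2: "f ` {F i k | i k. P i k} = {f (F i k) | i k. P i k}" by blast

lemma shape:
  fixes A :: "(real \<times> real) set" and a :: "nat \<Rightarrow> nat" and \<delta> :: int
  assumes g: "g > 0" and b: "\<beta> > 0"
    and A: "A = {(x0 + real i * g, M0 + real i * D + real k * \<beta>) | i k. i < m \<and> k < a i}"
    and lin: "\<forall>i<m. int (a i) = int (a 0) + \<delta> * int i"
    and m: "m \<ge> 1" and last: "a (m - 1) \<ge> 1" and a0: "a 0 \<ge> 1"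
  shows "std_trapezoid ((\<lambda>(x,y). (x/g, y/\<beta>)) ` A) m (int (a 0)) (D/\<beta> + of_int \<delta>) (D/\<beta>)"
proof -
  define d where "d = D/\<beta>"
  define h where "h = int (a 0)"
  have T: "trap_base m h (d + of_int \<delta>) d = {(real i, real k + real i * d) | i k. i < m \<and> int k < h + \<delta> * int i}"
    by (rule trap_char) simp
  have pt: "\<And>i k. (\<lambda>(x,y). (x/g, y/\<beta>)) (x0 + real i * g, M0 + real i * D + real k * \<beta>) =
      (x0/g + real i, M0/\<beta> + (real k + real i * d))"
    using g b unfolding d_def by (simp add: field_simps)
  have pt2: "\<And>i k. (\<lambda>p. (x0/g, M0/\<beta>) + p) (real i, real k + real i * d) =
      (x0/g + real i, M0/\<beta> + (real k + real i * d))" by simp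
  have cond: "\<And>i k. i < m \<Longrightarrow> (k < a i \<longleftrightarrow> int k < h + \<delta> * int i)"
    using lin unfolding h_def by (metis of_nat_less_iff)
  have img: "(\<lambda>(x,y). (x/g, y/\<beta>)) ` A = (\<lambda>p. (x0/g, M0/\<beta>) + p) ` trap_base m h (d + of_int \<delta>) d"
  proof -
    have "(\<lambda>(x,y). (x/g, y/\<beta>)) ` A = {(x0/g + real i, M0/\<beta> + (real k + real i * d)) | i k. i < m \<and> k < a i}"
      unfolding A img_collect2 pt by simp
    also have "\<dots> = {(x0/g + real i, M0/\<beta> + (real k + real i * d)) | i k. i < m \<and> int k < h + \<delta> * int i}"
      using cond by blast
    also have "\<dots> = (\<lambda>p. (x0/g, M0/\<beta>) + p) ` trap_base m h (d + of_int \<delta>) d"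
      unfolding T img_collect2 pt2 by simp
    finally show ?thesis .
  qed
  have mm: "m - 1 < m" using m by simp
  have eq: "int (a (m - 1)) = h + \<delta> * int (m - 1)" using lin mm unfolding h_def by blast
  have "int (a (m - 1)) \<ge> 1" using last by simp
  then have i1: "1 \<le> h + \<delta> * int (m - 1)" using eq by linarith
  then have "real_of_int 1 \<le> real_of_int (h + \<delta> * int (m - 1))" by (simp only: of_int_le_iff)
  then have "real_of_int h - 1 + real_of_int \<delta> * real (m - 1) \<ge> 0" by simp
  moreover have "real (m - 1) = real m - 1" using m by (simp add: of_nat_diff)
  ultimately have cnd: "real_of_int h - 1 + (real m - 1) * (d + of_int \<delta>) \<ge> (real m - 1) * d"
    by (simp add: algebra_simps)
  have "std_trapezoid ((\<lambda>(x,y). (x/g, y/\<beta>)) ` A) m h (d + of_int \<delta>) d"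
    unfolding std_trapezoid_def using m a0 cnd img unfolding h_def by auto
  then show ?thesis unfolding d_def h_def by simp
qed



lemma vertical_collinear: "(\<forall>p\<in>A. fst p = c) \<Longrightarrow> collinear (A :: (real \<times> real) set)"
  unfolding collinear_def
proof (intro exI[of _ "(0::real, 1::real)"] ballI)
  fix x y assume "\<forall>p\<in>A. fst p = c" "x \<in> A" "y \<in> A"
  then have "fst x = c" "fst y = c" by auto
  then have "x - y = (snd x - snd y) *\<^sub>R (0, 1)" by (simp add: prod_eq_iff)
  then show "\<exists>c. x - y = c *\<^sub>R (0, 1)" by blast
qed

lemma line_collinear:
  assumes "\<forall>p\<in>A. \<exists>k::nat. p = (x0 + real k * g, M0 + real k * D)"
  shows "collinear (A :: (real \<times> real) set)"
  unfolding collinear_def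
proof (intro exI[of _ "(g, D)"] ballI)
  fix x y assume "x \<in> A" "y \<in> A"
  then obtain k k' where "x = (x0 + real k * g, M0 + real k * D)" "y = (x0 + real k' * g, M0 + real k' * D)"
    using assms by blast
  then have "x - y = (real k - real k') *\<^sub>R (g, D)" by (simp add: algebra_simps)
  then show "\<exists>c. x - y = c *\<^sub>R (g, D)" by blast
qed

lemma card1_Min: "finite S \<Longrightarrow> card S = 1 \<Longrightarrow> S = {Min S}"
  by (metis card_1_singletonE Min_singleton)

context twocol begin

definition "good \<longleftrightarrow> 2 \<le> length xs \<and> 2 \<le> length ys \<and>
   N (length xs - 1) (length ys - 1) = V (length xs - 1) (length ys - 1)"

end
context twocol begin

lemma sw_good: "sw.good = good"
  unfolding good_def sw.good_def using sw_N sw_V by auto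

lemma shiftG: "good \<Longrightarrow> Suc i < length xs \<Longrightarrow> Suc j < length ys \<Longrightarrow>
   xs!Suc i + ys!j = xs!i + ys!Suc j \<and> sum1 (colA (Suc i)) (colB j) = sum1 (colA i) (colB (Suc j))"
proof -
  assume g: good and a: "Suc i < length xs" "Suc j < length ys"
  have "C i (Suc j) = C (Suc i) j" by (rule C_eq) (use g a in \<open>auto simp: good_def\<close>)
  then show ?thesis using shift a by blast
qed

lemma ca_pos: "i < length xs \<Longrightarrow> card (colA i) \<ge> 1"
  using colA_ne colA_fin by (simp add: Suc_leI card_gt_0_iff)

lemma xAP: assumes "good"
  shows "\<forall>i<length xs. xs!i = xs!0 + real i * (ys!1 - ys!0)"
        "\<forall>j<length ys. ys!j = ys!0 + real j * (ys!1 - ys!0)"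
proof -
  have h: "\<And>i j. Suc i < length xs \<Longrightarrow> Suc j < length ys \<Longrightarrow> xs!Suc i + ys!j = xs!i + ys!Suc j"
    using shiftG assms by blast
  have c: "2 \<le> length xs" "2 \<le> length ys" using assms unfolding good_def by auto
  note L = lin_seq[where u="\<lambda>i. xs!i" and v="\<lambda>j. ys!j", OF h c]
  show "\<forall>i<length xs. xs!i = xs!0 + real i * (ys!1 - ys!0)" using L(1) .
  show "\<forall>j<length ys. ys!j = ys!0 + real j * (ys!1 - ys!0)" using L(2) .
qed

lemma minAP: assumes "good"
  shows "\<forall>i<length xs. Min (colA i) = Min (colA 0) + real i * (Min (colB 1) - Min (colB 0))"
        "\<forall>j<length ys. Min (colB j) = Min (colB 0) + real j * (Min (colB 1) - Min (colB 0))"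
proof -
  have h: "\<And>i j. Suc i < length xs \<Longrightarrow> Suc j < length ys \<Longrightarrow>
      Min (colA (Suc i)) + Min (colB j) = Min (colA i) + Min (colB (Suc j))"
  proof -
    fix i j assume a: "Suc i < length xs" "Suc j < length ys"
    have e: "sum1 (colA (Suc i)) (colB j) = sum1 (colA i) (colB (Suc j))" using shiftG assms a by blast
    have f: "finite (colB j)" "finite (colB (Suc j))" using sw.colA_fin sw_colA by metis+
    have ne: "colB j \<noteq> {}" "colB (Suc j) \<noteq> {}" using sw.colA_ne sw_colA a by (metis Suc_lessD)+
    have ne2: "colA i \<noteq> {}" "colA (Suc i) \<noteq> {}" using colA_ne a by auto
    show "Min (colA (Suc i)) + Min (colB j) = Min (colA i) + Min (colB (Suc j))"
      using Min_sum1[of "colA (Suc i)" "colB j"] Min_sum1[of "colA i" "colB (Suc j)"] e f ne ne2 colA_fin by simp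
  qed
  have c: "2 \<le> length xs" "2 \<le> length ys" using assms unfolding good_def by auto
  note L = lin_seq[where u="\<lambda>i. Min (colA i)" and v="\<lambda>j. Min (colB j)", OF h c]
  show "\<forall>i<length xs. Min (colA i) = Min (colA 0) + real i * (Min (colB 1) - Min (colB 0))" using L(1) .
  show "\<forall>j<length ys. Min (colB j) = Min (colB 0) + real j * (Min (colB 1) - Min (colB 0))" using L(2) .
qed

lemma colsum_nat: assumes "good" "i < length xs" "j < length ys"
  shows "card (sum1 (colA i) (colB j)) = card (colA i) + card (colB j) - 1"
proof -
  have "real (card (sum1 (colA i) (colB j))) = real (card (colA i)) + real (card (colB j)) - 1"
    by (rule colsum_eq) (use assms in \<open>auto simp: good_def\<close>)
  moreover have "card (colA i) \<ge> 1" using ca_pos assms by simp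
  ultimately show ?thesis by linarith
qed

lemma sizeAP: assumes "good"
  shows "\<forall>i<length xs. real (card (colA i)) = real (card (colA 0)) + real i * (real (card (colB 1)) - real (card (colB 0)))"
        "\<forall>j<length ys. real (card (colB j)) = real (card (colB 0)) + real j * (real (card (colB 1)) - real (card (colB 0)))"
proof -
  have h: "\<And>i j. Suc i < length xs \<Longrightarrow> Suc j < length ys \<Longrightarrow>
      real (card (colA (Suc i))) + real (card (colB j)) = real (card (colA i)) + real (card (colB (Suc j)))"
  proof -
    fix i j assume a: "Suc i < length xs" "Suc j < length ys"
    have e: "sum1 (colA (Suc i)) (colB j) = sum1 (colA i) (colB (Suc j))" using shiftG assms a by blast
    have g: "N (length xs - 1) (length ys - 1) = V (length xs - 1) (length ys - 1)" "0 < length xs" "0 < length ys"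
      using assms unfolding good_def by auto
    show "real (card (colA (Suc i))) + real (card (colB j)) = real (card (colA i)) + real (card (colB (Suc j)))"
      using colsum_eq[OF g(2,3,1), of "Suc i" j] colsum_eq[OF g(2,3,1), of i "Suc j"] e a by simp
  qed
  have c: "2 \<le> length xs" "2 \<le> length ys" using assms unfolding good_def by auto
  note L = lin_seq[where u="\<lambda>i. real (card (colA i))" and v="\<lambda>j. real (card (colB j))", OF h c]
  show "\<forall>i<length xs. real (card (colA i)) = real (card (colA 0)) + real i * (real (card (colB 1)) - real (card (colB 0)))" using L(1) .
  show "\<forall>j<length ys. real (card (colB j)) = real (card (colB 0)) + real j * (real (card (colB 1)) - real (card (colB 0)))" using L(2) .
qed

lemma big_col: assumes "good" "\<not> collinear A"
  shows "\<exists>i<length xs. card (colA i) \<ge> 2"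
proof (rule ccontr)
  assume "\<not> ?thesis"
  then have one: "card (colA i) = 1" if "i < length xs" for i using ca_pos that by force
  note X = xAP[OF assms(1)] and M = minAP[OF assms(1)]
  have "\<forall>p\<in>A. \<exists>k::nat. p = (xs!0 + real k * (ys!1 - ys!0), Min (colA 0) + real k * (Min (colB 1) - Min (colB 0)))"
  proof
    fix p assume pA: "p \<in> A"
    then obtain k where k: "k < length xs" "fst p = xs!k" using fstA by blast
    have "snd p \<in> colA k" using pA k unfolding colA_def by (metis mem_Collect_eq prod.collapse)
    moreover have "colA k = {Min (colA k)}" using card1_Min colA_fin one k by blast
    ultimately have "snd p = Min (colA k)" by blast
    then have "p = (xs!k, Min (colA k))" using k by (metis prod.collapse)
    then show "\<exists>k::nat. p = (xs!0 + real k * (ys!1 - ys!0), Min (colA 0) + real k * (Min (colB 1) - Min (colB 0)))"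
      using X(1) M(1) k(1) by metis
  qed
  then have "collinear A" by (rule line_collinear)
  then show False using assms by simp
qed

end
context twocol begin

lemma col_rep: assumes "good" "\<not> collinear A" "\<not> collinear B"
  shows "\<exists>\<beta>>0. (\<forall>i<length xs. colA i = {Min (colA i) + real k * \<beta> | k. k < card (colA i)}) \<and>
                (\<forall>j<length ys. colB j = {Min (colB j) + real k * \<beta> | k. k < card (colB j)})"
proof -
  obtain i0 where i0: "i0 < length xs" "card (colA i0) \<ge> 2" using big_col assms by blast
  obtain j0 where j0: "j0 < length ys" "card (colB j0) \<ge> 2"
    using sw.big_col[unfolded sw_good sw_colA] assms by blast
  have fB: "finite (colB j)" for j using sw.colA_fin sw_colA by metis
  have cb_pos: "card (colB j) \<ge> 1" if "j < length ys" for j using sw.ca_pos sw_colA that by metis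
  obtain \<beta> where b: "\<beta> > 0" "\<forall>k<card (colA i0). sorted_list_of_set (colA i0) ! k = Min (colA i0) + real k * \<beta>"
      "\<forall>k<card (colB j0). sorted_list_of_set (colB j0) ! k = Min (colB j0) + real k * \<beta>"
    using oneD[OF colA_fin fB i0(2) j0(2) colsum_nat[OF assms(1) i0(1) j0(1)]] by blast
  have A1: "colA i = {Min (colA i) + real k * \<beta> | k. k < card (colA i)}" if i: "i < length xs" for i
  proof (cases "card (colA i) \<ge> 2")
    case True
    obtain \<beta>' where b': "\<beta>' > 0" "\<forall>k<card (colA i). sorted_list_of_set (colA i) ! k = Min (colA i) + real k * \<beta>'"
      "\<forall>k<card (colB j0). sorted_list_of_set (colB j0) ! k = Min (colB j0) + real k * \<beta>'"
      using oneD[OF colA_fin fB True j0(2) colsum_nat[OF assms(1) i j0(1)]] by blast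
    have "1 < card (colB j0)" using j0 by simp
    then have "\<beta>' = \<beta>" using b(3) b'(3) by (metis of_nat_1 mult_1 add_left_cancel)
    then show ?thesis using ap_set[OF colA_fin] b'(2) by simp
  next
    case False
    then have "card (colA i) = 1" using ca_pos i by force
    then have "colA i = {Min (colA i)}" using card1_Min colA_fin by blast
    then show ?thesis using \<open>card (colA i) = 1\<close> by auto
  qed
  have B1: "colB j = {Min (colB j) + real k * \<beta> | k. k < card (colB j)}" if j: "j < length ys" for j
  proof (cases "card (colB j) \<ge> 2")
    case True
    obtain \<beta>' where b': "\<beta>' > 0" "\<forall>k<card (colA i0). sorted_list_of_set (colA i0) ! k = Min (colA i0) + real k * \<beta>'"
      "\<forall>k<card (colB j). sorted_list_of_set (colB j) ! k = Min (colB j) + real k * \<beta>'"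
      using oneD[OF colA_fin fB i0(2) True colsum_nat[OF assms(1) i0(1) j]] by blast
    have "1 < card (colA i0)" using i0 by simp
    then have "\<beta>' = \<beta>" using b(2) b'(2) by (metis of_nat_1 mult_1 add_left_cancel)
    then show ?thesis using ap_set[OF fB] b'(3) by simp
  next
    case False
    then have "card (colB j) = 1" using cb_pos j by force
    then have "colB j = {Min (colB j)}" using card1_Min fB by blast
    then show ?thesis using \<open>card (colB j) = 1\<close> by auto
  qed
  show ?thesis using A1 B1 b(1) by blast
qed

lemma A_rep:
  assumes "\<forall>i<length xs. xs!i = x0 + real i * g"
    "\<forall>i<length xs. colA i = {M0 + real i * D + real k * \<beta> | k. k < card (colA i)}"
  shows "A = {(x0 + real i * g, M0 + real i * D + real k * \<beta>) | i k. i < length xs \<and> k < card (colA i)}"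
proof
  show "A \<subseteq> {(x0 + real i * g, M0 + real i * D + real k * \<beta>) | i k. i < length xs \<and> k < card (colA i)}"
  proof
    fix p assume pA: "p \<in> A"
    then obtain i where i: "i < length xs" "fst p = xs!i" using fstA by blast
    have "snd p \<in> colA i" using pA i unfolding colA_def by (metis mem_Collect_eq prod.collapse)
    then obtain k where k: "k < card (colA i)" "snd p = M0 + real i * D + real k * \<beta>"
      using assms(2) i(1) by blast
    have "p = (x0 + real i * g, M0 + real i * D + real k * \<beta>)"
      using i k assms(1) by (metis prod.collapse)
    then show "p \<in> {(x0 + real i * g, M0 + real i * D + real k * \<beta>) | i k. i < length xs \<and> k < card (colA i)}"
      using i(1) k(1) by blast
  qed
  show "{(x0 + real i * g, M0 + real i * D + real k * \<beta>) | i k. i < length xs \<and> k < card (colA i)} \<subseteq> A"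
  proof
    fix p assume "p \<in> {(x0 + real i * g, M0 + real i * D + real k * \<beta>) | i k. i < length xs \<and> k < card (colA i)}"
    then obtain i k where p: "p = (x0 + real i * g, M0 + real i * D + real k * \<beta>)" "i < length xs" "k < card (colA i)"
      by blast
    have "M0 + real i * D + real k * \<beta> \<in> colA i" using assms(2) p by blast
    then have "(xs!i, M0 + real i * D + real k * \<beta>) \<in> A" unfolding colA_def by simp
    then show "p \<in> A" using p assms(1) by simp
  qed
qed

end


lemma int_lin: "real x = real y + real i * (real b1 - real b0) \<Longrightarrow> int x = int y + (int b1 - int b0) * int i"
proof -
  assume h: "real x = real y + real i * (real b1 - real b0)"
  have "real_of_int (int x) = real_of_int (int y + (int b1 - int b0) * int i)" using h by (simp add: algebra_simps)
  then show ?thesis by (simp only: of_int_eq_iff)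
qed

theorem theorem2p2:
  fixes A B :: "(real \<times> real) set" and m n :: nat
  assumes "finite A" and "finite B"
    and "\<not> collinear A" and "\<not> collinear B"
    and "0 \<in> A \<inter> B"
    and "m = card (fst ` A)" and "n = card (fst ` B)"
    and "real (card (sumset A B)) =
           (real (card A) / real m + real (card B) / real n - 1) * (real m + real n - 1)"
  shows "\<exists>\<alpha> \<beta> :: real. \<alpha> > 0 \<and> \<beta> > 0 \<and>
           (\<exists>c d :: real. \<exists>h h' :: int. h \<ge> 1 \<and> h' \<ge> 1 \<and>
              std_trapezoid ((\<lambda>(x, y). (x / \<alpha>, y / \<beta>)) ` A) m h c d \<and>
              std_trapezoid ((\<lambda>(x, y). (x / \<alpha>, y / \<beta>)) ` B) n h' c d)"
proof -
  define xs where "xs = sorted_list_of_set (fst ` A)"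
  define ys where "ys = sorted_list_of_set (fst ` B)"
  have fA: "finite (fst ` A)" using assms(1) by simp
  have fB: "finite (fst ` B)" using assms(2) by simp
  interpret T: twocol A B xs ys
    by unfold_locales (simp_all add: assms(1,2) xs_def ys_def fA fB)
  have lx: "length xs = m" using assms(6) xs_def by simp
  have ly: "length ys = n" using assms(7) ys_def by simp
  have m2: "m \<ge> 2"
  proof (rule ccontr)
    assume a: "\<not> m \<ge> 2"
    have "fst ` A \<noteq> {}" using assms(5) by auto
    then have "m > 0" using assms(6) fA by (simp add: card_gt_0_iff)
    then have "card (fst ` A) = 1" using a assms(6) by simp
    then obtain c where "fst ` A = {c}" by (rule card_1_singletonE)
    then have "\<forall>p\<in>A. fst p = c" by auto
    then have "collinear A" by (rule vertical_collinear)
    then show False using assms(3) by simp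
  qed
  have n2: "n \<ge> 2"
  proof (rule ccontr)
    assume a: "\<not> n \<ge> 2"
    have "fst ` B \<noteq> {}" using assms(5) by auto
    then have "n > 0" using assms(7) fB by (simp add: card_gt_0_iff)
    then have "card (fst ` B) = 1" using a assms(7) by simp
    then obtain c where "fst ` B = {c}" by (rule card_1_singletonE)
    then have "\<forall>p\<in>B. fst p = c" by auto
    then have "collinear B" by (rule vertical_collinear)
    then show False using assms(4) by simp
  qed
  have pA: "T.preA (m - 1) = A" using T.preA_last lx m2 by simp
  have pB: "T.preB (n - 1) = B" using T.sw.preA_last ly n2 T.sw_preA by simp
  have Nv: "T.N (m - 1) (n - 1) = real (card (sumset A B))"
    unfolding T.N_def T.C_def pA pB by simp
  have rm: "real (m - 1) = real m - 1" and rn: "real (n - 1) = real n - 1" using m2 n2 by (simp_all add: of_nat_diff)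
  have Vv: "T.V (m - 1) (n - 1) = (real (card A) / real m + real (card B) / real n - 1) * (real m + real n - 1)"
    unfolding T.V_def pA pB rm rn by (simp add: algebra_simps)
  have good: T.good unfolding T.good_def using lx ly m2 n2 Nv Vv assms(8) by simp
  obtain \<beta> where b: "\<beta> > 0"
    "\<forall>i<length xs. T.colA i = {Min (T.colA i) + real k * \<beta> | k. k < card (T.colA i)}"
    "\<forall>j<length ys. T.colB j = {Min (T.colB j) + real k * \<beta> | k. k < card (T.colB j)}"
    using T.col_rep[OF good assms(3,4)] by blast
  note X = T.xAP[OF good] and M = T.minAP[OF good] and S = T.sizeAP[OF good]
  define g where "g = ys!1 - ys!0"
  have g: "g > 0" using T.sw.xlt[of 0 1] ly n2 unfolding g_def by simp
  define D where "D = Min (T.colB 1) - Min (T.colB 0)"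
  define \<delta> where "\<delta> = int (card (T.colB 1)) - int (card (T.colB 0))"
  have cA: "\<forall>i<length xs. T.colA i = {Min (T.colA 0) + real i * D + real k * \<beta> | k. k < card (T.colA i)}"
  proof (intro allI impI)
    fix i assume i: "i < length xs"
    have "Min (T.colA i) = Min (T.colA 0) + real i * D" using M(1) i unfolding D_def by blast
    moreover have "T.colA i = {Min (T.colA i) + real k * \<beta> | k. k < card (T.colA i)}" using b(2) i by blast
    ultimately show "T.colA i = {Min (T.colA 0) + real i * D + real k * \<beta> | k. k < card (T.colA i)}" by simp
  qed
  have cB: "\<forall>j<length ys. T.sw.colA j = {Min (T.colB 0) + real j * D + real k * \<beta> | k. k < card (T.sw.colA j)}"
  proof (intro allI impI)
    fix j assume j: "j < length ys"
    have "Min (T.colB j) = Min (T.colB 0) + real j * D" using M(2) j unfolding D_def by blast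
    moreover have "T.colB j = {Min (T.colB j) + real k * \<beta> | k. k < card (T.colB j)}" using b(3) j by blast
    ultimately show "T.sw.colA j = {Min (T.colB 0) + real j * D + real k * \<beta> | k. k < card (T.sw.colA j)}"
      unfolding T.sw_colA by simp
  qed
  have xA: "\<forall>i<length xs. xs!i = xs!0 + real i * g" using X(1) unfolding g_def .
  have yA: "\<forall>j<length ys. ys!j = ys!0 + real j * g" using X(2) unfolding g_def .
  have repA: "A = {(xs!0 + real i * g, Min (T.colA 0) + real i * D + real k * \<beta>) | i k. i < m \<and> k < card (T.colA i)}"
    using T.A_rep[OF xA cA] lx by simp
  have repB: "B = {(ys!0 + real i * g, Min (T.colB 0) + real i * D + real k * \<beta>) | i k. i < n \<and> k < card (T.colB i)}"
    using T.sw.A_rep[OF yA cB] ly unfolding T.sw_colA by simp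
  have linA: "\<forall>i<m. int (card (T.colA i)) = int (card (T.colA 0)) + \<delta> * int i"
  proof (intro allI impI)
    fix i assume "i < m"
    then have "i < length xs" using lx by simp
    then have "real (card (T.colA i)) = real (card (T.colA 0)) + real i * (real (card (T.colB 1)) - real (card (T.colB 0)))"
      using S(1) by blast
    then show "int (card (T.colA i)) = int (card (T.colA 0)) + \<delta> * int i" unfolding \<delta>_def by (rule int_lin)
  qed
  have linB: "\<forall>i<n. int (card (T.colB i)) = int (card (T.colB 0)) + \<delta> * int i"
  proof (intro allI impI)
    fix i assume "i < n"
    then have "i < length ys" using ly by simp
    then have "real (card (T.colB i)) = real (card (T.colB 0)) + real i * (real (card (T.colB 1)) - real (card (T.colB 0)))"
      using S(2) by blast
    then show "int (card (T.colB i)) = int (card (T.colB 0)) + \<delta> * int i" unfolding \<delta>_def by (rule int_lin)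
  qed
  have a1: "card (T.colA (m - 1)) \<ge> 1" "card (T.colA 0) \<ge> 1" using T.ca_pos lx m2 by auto
  have b1: "card (T.colB (n - 1)) \<ge> 1" "card (T.colB 0) \<ge> 1" using T.sw.ca_pos T.sw_colA ly n2 by auto
  have m1: "m \<ge> 1" "n \<ge> 1" using m2 n2 by auto
  have SA: "std_trapezoid ((\<lambda>(x,y). (x/g, y/\<beta>)) ` A) m (int (card (T.colA 0))) (D/\<beta> + of_int \<delta>) (D/\<beta>)"
    by (rule shape[OF g b(1) repA linA m1(1) a1])
  have SB: "std_trapezoid ((\<lambda>(x,y). (x/g, y/\<beta>)) ` B) n (int (card (T.colB 0))) (D/\<beta> + of_int \<delta>) (D/\<beta>)"
    by (rule shape[OF g b(1) repB linB m1(2) b1])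
  show ?thesis
    apply (rule exI[of _ g], rule exI[of _ \<beta>])
    using g b(1) SA SB a1(2) b1(2) by (intro conjI exI[of _ "D/\<beta> + of_int \<delta>"] exI[of _ "D/\<beta>"]
        exI[of _ "int (card (T.colA 0))"] exI[of _ "int (card (T.colB 0))"]) auto
qed

end
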